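(* Let $M_I$ and $N_J$ be factor systems and assume Condition (D). For all $\zeta,\zeta'\in\mathrm{elem}([M_I\to N_J])$: if $\zeta(\alpha)=\zeta'(\alpha)$ for all $\alpha\in\mathrm{elem}(M_I)$, then $\zeta=\zeta'$.
   Context: For every non-empty directed preordered set $I$ a family $\mathcal F(I)$ of subsets of $I$ is fixed such that every member is cofinal, $\mathcal F(I)$ is closed under supersets and finite intersections, and it contains every non-empty upward closed subset. Condition (D): for all such $I,J$, if $H\in\mathcal F(I\times J)$ (product order) and $I'\in\mathcal F(I)$, then $H[I']:=\{j\in J\mid\exists i\in I',\ (i,j)\in H\}\in\mathcal F(J)$. A system $(M_I,\triangleright)$: pairwise disjoint sets $M_i$ with relations $\triangleright\subseteq M_{i'}\times M_i$ ($i\le i'$), reflexive for $i=i'$; $a_i\approx b_j$ iff some $c\in M_{i'}$, $i'\ge i,j$, has $c\triangleright a_i$, $c\triangleright b_j$; prefactor system: $a_{i'}\approx a_i\iff a_{i'}\triangleright a_i$. A factor system is a prefactor system with $\approx$-preserving maps $emb_{i,i'}:M_i\to M_{i'}$, $proj_{i',i}:M_{i'}\to M_i$ ($i\le i'$) such that $emb_{i,i}(a)\approx a$, $proj_{i,i}(a)\approx a$, $emb_{i',i''}(emb_{i,i'}(a))\approx emb_{i,i''}(a)$, $proj_{i',i}(proj_{i'',i'}(a))\approx proj_{i'',i}(a)$, $proj_{i',i}(emb_{i,i'}(a))\approx a$, and for $i\le i'\le i''$: $a_{i'}\triangleright a_i\Rightarrow emb_{i',i''}(a_{i'})\triangleright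 a_i$ and $a_{i''}\triangleright a_i\Rightarrow proj_{i'',i'}(a_{i''})\triangleright a_i$. The function space $[M_I\to N_J]$ is indexed by $I\times J$ (indices written $i\to j$), with states $[M_i\to N_j]$ = all $\approx$-preserving functions $M_i\to N_j$, and $f'\triangleright f$ (for $i\to j\le i'\to j'$) iff $a_{i'}\triangleright a_i$ implies $f'(a_{i'})\triangleright f(a_i)$; embeddings $f\mapsto emb_{j,j'}\circ f\circ proj_{i',i}$, projections $f'\mapsto proj_{j',j}\circ f'\circ emb_{i,i'}$. A consistent set in a system is $\alpha\subseteq\bigcup_iM_i$ such that $a_{i'}\triangleright a_i$ for all $a_{i'},a_i\in\alpha$ with $i'\ge i$, and $\{i\mid\alpha\cap M_i\ne\emptyset\}\in\mathcal F(I)$; $\mathrm{elem}(M_I)$ is the set of inclusion-maximal consistent sets. For a consistent set $\zeta$ of $[M_I\to N_J]$ and a consistent set $\alpha$ of $M_I$, $\zeta(\alpha):=\{f(a_i)\mid f\in\zeta\cap[M_i\to N_j]\text{ for some }j,\ a_i\in\alpha\cap M_i\}$. *)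

theory Defs
  imports Main "HOL-Library.FuncSet"
begin

definition directed_preorder :: "'i set \<Rightarrow> ('i \<Rightarrow> 'i \<Rightarrow> bool) \<Rightarrow> bool" where
  "directed_preorder I le \<longleftrightarrow> I \<noteq> {} \<and> (\<forall>i\<in>I. le i i)
     \<and> (\<forall>i\<in>I. \<forall>j\<in>I. \<forall>k\<in>I. le i j \<longrightarrow> le j k \<longrightarrow> le i k)
     \<and> (\<forall>i\<in>I. \<forall>j\<in>I. \<exists>k\<in>I. le i k \<and> le j k)"

definition cofinal :: "'i set \<Rightarrow> ('i \<Rightarrow> 'i \<Rightarrow> bool) \<Rightarrow> 'i set \<Rightarrow> bool" where
  "cofinal I le A \<longleftrightarrow> A \<subseteq> I \<and> (\<forall>i\<in>I. \<exists>k\<in>A. le i k)"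

definition upward_closed :: "'i set \<Rightarrow> ('i \<Rightarrow> 'i \<Rightarrow> bool) \<Rightarrow> 'i set \<Rightarrow> bool" where
  "upward_closed I le A \<longleftrightarrow> A \<subseteq> I \<and> (\<forall>i\<in>A. \<forall>k\<in>I. le i k \<longrightarrow> k \<in> A)"

definition admissible_family :: "'i set \<Rightarrow> ('i \<Rightarrow> 'i \<Rightarrow> bool) \<Rightarrow> 'i set set \<Rightarrow> bool" where
  "admissible_family I le F \<longleftrightarrow>
     (\<forall>A\<in>F. cofinal I le A)
     \<and> (\<forall>A\<in>F. \<forall>B. A \<subseteq> B \<and> B \<subseteq> I \<longrightarrow> B \<in> F)
     \<and> (\<forall>A\<in>F. \<forall>B\<in>F. A \<inter> B \<in> F)
     \<and> (\<forall>A. upward_closed I le A \<and> A \<noteq> {} \<longrightarrow> A \<in> F)"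

definition prod_le :: "('i \<Rightarrow> 'i \<Rightarrow> bool) \<Rightarrow> ('j \<Rightarrow> 'j \<Rightarrow> bool) \<Rightarrow> 'i \<times> 'j \<Rightarrow> 'i \<times> 'j \<Rightarrow> bool" where
  "prod_le leI leJ p q \<longleftrightarrow> leI (fst p) (fst q) \<and> leJ (snd p) (snd q)"

definition condD :: "'i set \<Rightarrow> 'j set \<Rightarrow> 'i set set \<Rightarrow> 'j set set \<Rightarrow> ('i \<times> 'j) set set \<Rightarrow> bool" where
  "condD I J FI FJ FIJ \<longleftrightarrow>
     (\<forall>H\<in>FIJ. \<forall>I'\<in>FI. {j\<in>J. \<exists>i\<in>I'. (i, j) \<in> H} \<in> FJ)"

definition is_system :: "'i set \<Rightarrow> ('i \<Rightarrow> 'i \<Rightarrow> bool) \<Rightarrow> ('i \<Rightarrow> 'a set) \<Rightarrow> ('a \<Rightarrow> 'a \<Rightarrow> bool) \<Rightarrow> bool" where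
  "is_system I le M tr \<longleftrightarrow>
     (\<forall>i\<in>I. \<forall>i'\<in>I. i \<noteq> i' \<longrightarrow> M i \<inter> M i' = {})
     \<and> (\<forall>a b. tr a b \<longrightarrow> (\<exists>i\<in>I. \<exists>i'\<in>I. le i i' \<and> a \<in> M i' \<and> b \<in> M i))
     \<and> (\<forall>i\<in>I. \<forall>a\<in>M i. tr a a)"

definition sys_approx :: "'i set \<Rightarrow> ('i \<Rightarrow> 'i \<Rightarrow> bool) \<Rightarrow> ('i \<Rightarrow> 'a set) \<Rightarrow> ('a \<Rightarrow> 'a \<Rightarrow> bool) \<Rightarrow> 'a \<Rightarrow> 'a \<Rightarrow> bool" where
  "sys_approx I le M tr a b \<longleftrightarrow>
     (\<exists>i\<in>I. \<exists>j\<in>I. \<exists>i'\<in>I. \<exists>c\<in>M i'. a \<in> M i \<and> b \<in> M j \<and> le i i' \<and> le j i' \<and> tr c a \<and> tr c b)"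

definition prefactor_system :: "'i set \<Rightarrow> ('i \<Rightarrow> 'i \<Rightarrow> bool) \<Rightarrow> ('i \<Rightarrow> 'a set) \<Rightarrow> ('a \<Rightarrow> 'a \<Rightarrow> bool) \<Rightarrow> bool" where
  "prefactor_system I le M tr \<longleftrightarrow> is_system I le M tr
     \<and> (\<forall>i\<in>I. \<forall>i'\<in>I. le i i' \<longrightarrow> (\<forall>a'\<in>M i'. \<forall>a\<in>M i. sys_approx I le M tr a' a \<longleftrightarrow> tr a' a))"

definition approx_preserving :: "'a set \<Rightarrow> ('a \<Rightarrow> 'a \<Rightarrow> bool) \<Rightarrow> ('b \<Rightarrow> 'b \<Rightarrow> bool) \<Rightarrow> ('a \<Rightarrow> 'b) \<Rightarrow> bool" where
  "approx_preserving A apA apB f \<longleftrightarrow> (\<forall>a\<in>A. \<forall>b\<in>A. apA a b \<longrightarrow> apB (f a) (f b))"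

definition factor_system :: "'i set \<Rightarrow> ('i \<Rightarrow> 'i \<Rightarrow> bool) \<Rightarrow> ('i \<Rightarrow> 'a set) \<Rightarrow> ('a \<Rightarrow> 'a \<Rightarrow> bool)
    \<Rightarrow> ('i \<Rightarrow> 'i \<Rightarrow> 'a \<Rightarrow> 'a) \<Rightarrow> ('i \<Rightarrow> 'i \<Rightarrow> 'a \<Rightarrow> 'a) \<Rightarrow> bool" where
  "factor_system I le M tr emb proj \<longleftrightarrow> prefactor_system I le M tr \<and>
     (let ap = sys_approx I le M tr in
       (\<forall>i\<in>I. \<forall>i'\<in>I. le i i' \<longrightarrow>
          emb i i' \<in> M i \<rightarrow> M i' \<and> proj i' i \<in> M i' \<rightarrow> M i
          \<and> approx_preserving (M i) ap ap (emb i i') \<and> approx_preserving (M i') ap ap (proj i' i))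
     \<and> (\<forall>i\<in>I. \<forall>a\<in>M i. ap (emb i i a) a \<and> ap (proj i i a) a)
     \<and> (\<forall>i\<in>I. \<forall>i'\<in>I. \<forall>i''\<in>I. le i i' \<longrightarrow> le i' i'' \<longrightarrow>
          (\<forall>a\<in>M i. ap (emb i' i'' (emb i i' a)) (emb i i'' a))
          \<and> (\<forall>a\<in>M i''. ap (proj i' i (proj i'' i' a)) (proj i'' i a)))
     \<and> (\<forall>i\<in>I. \<forall>i'\<in>I. le i i' \<longrightarrow> (\<forall>a\<in>M i. ap (proj i' i (emb i i' a)) a))
     \<and> (\<forall>i\<in>I. \<forall>i'\<in>I. \<forall>i''\<in>I. le i i' \<longrightarrow> le i' i'' \<longrightarrow>
          (\<forall>a'\<in>M i'. \<forall>a\<in>M i. tr a' a \<longrightarrow> tr (emb i' i'' a') a)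
          \<and> (\<forall>a''\<in>M i''. \<forall>a\<in>M i. tr a'' a \<longrightarrow> tr (proj i'' i' a'') a)))"

text \<open>A state of [M_i \<rightarrow> N_j] is tagged with its index (i, j); the function itself is
  an extensional (undefined outside M_i) approx-preserving map M_i \<rightarrow> N_j.\<close>
definition fs_states :: "'i set \<Rightarrow> ('i \<Rightarrow> 'i \<Rightarrow> bool) \<Rightarrow> ('i \<Rightarrow> 'a set) \<Rightarrow> ('a \<Rightarrow> 'a \<Rightarrow> bool)
    \<Rightarrow> 'j set \<Rightarrow> ('j \<Rightarrow> 'j \<Rightarrow> bool) \<Rightarrow> ('j \<Rightarrow> 'b set) \<Rightarrow> ('b \<Rightarrow> 'b \<Rightarrow> bool)
    \<Rightarrow> 'i \<times> 'j \<Rightarrow> (('i \<times> 'j) \<times> ('a \<Rightarrow> 'b)) set" where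
  "fs_states I leI M trM J leJ N trN p =
     {(p, f) | f. f \<in> M (fst p) \<rightarrow>\<^sub>E N (snd p)
        \<and> approx_preserving (M (fst p)) (sys_approx I leI M trM) (sys_approx J leJ N trN) f}"

definition fs_tr :: "'i set \<Rightarrow> ('i \<Rightarrow> 'i \<Rightarrow> bool) \<Rightarrow> ('i \<Rightarrow> 'a set) \<Rightarrow> ('a \<Rightarrow> 'a \<Rightarrow> bool)
    \<Rightarrow> 'j set \<Rightarrow> ('j \<Rightarrow> 'j \<Rightarrow> bool) \<Rightarrow> ('j \<Rightarrow> 'b set) \<Rightarrow> ('b \<Rightarrow> 'b \<Rightarrow> bool)
    \<Rightarrow> ('i \<times> 'j) \<times> ('a \<Rightarrow> 'b) \<Rightarrow> ('i \<times> 'j) \<times> ('a \<Rightarrow> 'b) \<Rightarrow> bool" where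
  "fs_tr I leI M trM J leJ N trN g' g \<longleftrightarrow>
     fst g \<in> I \<times> J \<and> fst g' \<in> I \<times> J \<and> prod_le leI leJ (fst g) (fst g')
     \<and> g \<in> fs_states I leI M trM J leJ N trN (fst g)
     \<and> g' \<in> fs_states I leI M trM J leJ N trN (fst g')
     \<and> (\<forall>a'\<in>M (fst (fst g')). \<forall>a\<in>M (fst (fst g)). trM a' a \<longrightarrow> trN (snd g' a') (snd g a))"

definition consistent :: "'i set \<Rightarrow> ('i \<Rightarrow> 'i \<Rightarrow> bool) \<Rightarrow> ('i \<Rightarrow> 'a set) \<Rightarrow> ('a \<Rightarrow> 'a \<Rightarrow> bool)
    \<Rightarrow> 'i set set \<Rightarrow> 'a set \<Rightarrow> bool" where
  "consistent I le M tr F \<alpha> \<longleftrightarrow> \<alpha> \<subseteq> (\<Union>i\<in>I. M i)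
     \<and> (\<forall>a\<in>\<alpha>. \<forall>b\<in>\<alpha>. \<forall>i\<in>I. \<forall>i'\<in>I. le i i' \<and> a \<in> M i' \<and> b \<in> M i \<longrightarrow> tr a b)
     \<and> {i\<in>I. \<alpha> \<inter> M i \<noteq> {}} \<in> F"

definition elem :: "'i set \<Rightarrow> ('i \<Rightarrow> 'i \<Rightarrow> bool) \<Rightarrow> ('i \<Rightarrow> 'a set) \<Rightarrow> ('a \<Rightarrow> 'a \<Rightarrow> bool)
    \<Rightarrow> 'i set set \<Rightarrow> 'a set set" where
  "elem I le M tr F = {\<alpha>. consistent I le M tr F \<alpha>
     \<and> (\<forall>\<beta>. consistent I le M tr F \<beta> \<and> \<alpha> \<subseteq> \<beta> \<longrightarrow> \<beta> = \<alpha>)}"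

definition fs_apply :: "('i \<Rightarrow> 'a set) \<Rightarrow> (('i \<times> 'j) \<times> ('a \<Rightarrow> 'b)) set \<Rightarrow> 'a set \<Rightarrow> 'b set" where
  "fs_apply M \<zeta> \<alpha> = {f a | p f a. (p, f) \<in> \<zeta> \<and> a \<in> \<alpha> \<and> a \<in> M (fst p)}"

end

theory Submission
  imports Defs
begin


lemma ap_intro: "\<lbrakk>p \<in> I; q \<in> I; m \<in> I; x \<in> M p; y \<in> M q; c \<in> M m; le p m; le q m; tr c x; tr c y\<rbrakk>
   \<Longrightarrow> sys_approx I le M tr x y"
  unfolding sys_approx_def by blast

lemma pf_tr: "\<lbrakk>prefactor_system I le M tr; p \<in> I; q \<in> I; le p q; x \<in> M q; y \<in> M p;
   sys_approx I le M tr x y\<rbrakk> \<Longrightarrow> tr x y"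
  unfolding prefactor_system_def by blast

lemma sys_refl: "\<lbrakk>prefactor_system I le M tr; p \<in> I; x \<in> M p\<rbrakk> \<Longrightarrow> tr x x"
  unfolding prefactor_system_def is_system_def by blast

lemma sys_disj: "\<lbrakk>prefactor_system I le M tr; p \<in> I; q \<in> I; x \<in> M p; x \<in> M q\<rbrakk> \<Longrightarrow> p = q"
  unfolding prefactor_system_def is_system_def by blast

lemma fac_pf: "factor_system I le M tr emb proj \<Longrightarrow> prefactor_system I le M tr"
  unfolding factor_system_def by simp

lemma fac_emb_in: "\<lbrakk>factor_system I le M tr emb proj; i \<in> I; i' \<in> I; le i i'; a \<in> M i\<rbrakk>
  \<Longrightarrow> emb i i' a \<in> M i'"
proof -
  assume h: "factor_system I le M tr emb proj" "i \<in> I" "i' \<in> I" "le i i'" "a \<in> M i"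
  from h(1) have "\<forall>i\<in>I. \<forall>i'\<in>I. le i i' \<longrightarrow> emb i i' \<in> M i \<rightarrow> M i'"
    unfolding factor_system_def Let_def by meson
  then have "emb i i' \<in> M i \<rightarrow> M i'" using h by blast
  then show ?thesis using h(5) by (rule funcset_mem)
qed

lemma fac_proj_in: "\<lbrakk>factor_system I le M tr emb proj; i \<in> I; i' \<in> I; le i i'; a \<in> M i'\<rbrakk>
  \<Longrightarrow> proj i' i a \<in> M i"
proof -
  assume h: "factor_system I le M tr emb proj" "i \<in> I" "i' \<in> I" "le i i'" "a \<in> M i'"
  from h(1) have "\<forall>i\<in>I. \<forall>i'\<in>I. le i i' \<longrightarrow> proj i' i \<in> M i' \<rightarrow> M i"
    unfolding factor_system_def Let_def by meson
  then have "proj i' i \<in> M i' \<rightarrow> M i" using h by blast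
  then show ?thesis using h(5) by (rule funcset_mem)
qed

lemma fac_emb_comp: "\<lbrakk>factor_system I le M tr emb proj; i \<in> I; i' \<in> I; i'' \<in> I; le i i'; le i' i''; a \<in> M i\<rbrakk>
  \<Longrightarrow> sys_approx I le M tr (emb i' i'' (emb i i' a)) (emb i i'' a)"
  unfolding factor_system_def Let_def by blast

lemma fac_emb_tr: "\<lbrakk>factor_system I le M tr emb proj; i \<in> I; i' \<in> I; i'' \<in> I; le i i'; le i' i'';
   a' \<in> M i'; a \<in> M i; tr a' a\<rbrakk> \<Longrightarrow> tr (emb i' i'' a') a"
  unfolding factor_system_def Let_def by blast

lemma fac_proj_tr: "\<lbrakk>factor_system I le M tr emb proj; i \<in> I; i' \<in> I; i'' \<in> I; le i i'; le i' i'';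
   a'' \<in> M i''; a \<in> M i; tr a'' a\<rbrakk> \<Longrightarrow> tr (proj i'' i' a'') a"
  unfolding factor_system_def Let_def by blast

lemma dp_refl: "\<lbrakk>directed_preorder I le; i \<in> I\<rbrakk> \<Longrightarrow> le i i"
  unfolding directed_preorder_def by blast

lemma dp_trans: "\<lbrakk>directed_preorder I le; i \<in> I; j \<in> I; k \<in> I; le i j; le j k\<rbrakk> \<Longrightarrow> le i k"
  unfolding directed_preorder_def by blast

lemma dp_ub: "\<lbrakk>directed_preorder I le; i \<in> I; j \<in> I\<rbrakk> \<Longrightarrow> \<exists>k\<in>I. le i k \<and> le j k"
  unfolding directed_preorder_def by blast

lemma emb_chain:
  assumes fac: "factor_system I le M tr emb proj" and dp: "directed_preorder I le"
    and I: "i' \<in> I" "k \<in> I" "m \<in> I" and le: "le i' k" "le k m" and a': "a' \<in> M i'"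
  shows "tr (emb i' m a') (emb i' k a')"
proof -
  have pf: "prefactor_system I le M tr" using fac by (rule fac_pf)
  define x where "x = emb i' k a'"
  define y where "y = emb i' m a'"
  define c where "c = emb k m x"
  have lim: "le i' m" using dp_trans[OF dp I le] .
  have x: "x \<in> M k" unfolding x_def using fac_emb_in[OF fac I(1,2) le(1) a'] .
  have y: "y \<in> M m" unfolding y_def using fac_emb_in[OF fac I(1,3) lim a'] .
  have c: "c \<in> M m" unfolding c_def using fac_emb_in[OF fac I(2,3) le(2) x] .
  have cx: "tr c x" unfolding c_def
    using fac_emb_tr[OF fac I(2,2,3) dp_refl[OF dp I(2)] le(2) x x sys_refl[OF pf I(2) x]] .
  have "sys_approx I le M tr c y" unfolding c_def x_def y_def
    using fac_emb_comp[OF fac I le a'] .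
  then have cy: "tr c y" using pf_tr[OF pf I(3) I(3) dp_refl[OF dp I(3)] c y] by blast
  have "sys_approx I le M tr y x"
    using ap_intro[where M=M and I=I and le=le and tr=tr, OF I(3) I(2) I(3) y x c dp_refl[OF dp I(3)] le(2) cy cx] .
  then show ?thesis using pf_tr[OF pf I(2) I(3) le(2) y x] unfolding x_def y_def by blast
qed

lemma exists_elem:
  assumes fac: "factor_system I le M tr emb proj" and dp: "directed_preorder I le"
    and F: "admissible_family I le F"
    and I: "i \<in> I" "i' \<in> I" and le: "le i i'" and a: "a \<in> M i" and a': "a' \<in> M i'"
    and t: "tr a' a"
  shows "\<exists>\<alpha>\<in>elem I le M tr F. a \<in> \<alpha> \<and> a' \<in> \<alpha>"
proof -
  have pf: "prefactor_system I le M tr" using fac by (rule fac_pf)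
  define \<alpha>0 where "\<alpha>0 = {a, a'} \<union> {emb i' k a' | k. k \<in> I \<and> le i' k}"
  have P: "\<exists>p\<in>I. x \<in> M p \<and> (\<forall>m\<in>I. le i' m \<longrightarrow> le p m \<longrightarrow> tr (emb i' m a') x)" if xa0: "x \<in> \<alpha>0" for x
  proof -
    consider "x = a" | "x = a'" | k where "k \<in> I" "le i' k" "x = emb i' k a'"
      using xa0 unfolding \<alpha>0_def by blast
    then show ?thesis
    proof cases
      case 1
      then show ?thesis using fac_emb_tr[OF fac I(1,2) _ le _ a' a t] I a by blast
    next
      case 2
      then show ?thesis using fac_emb_tr[OF fac I(2,2) _ dp_refl[OF dp I(2)] _ a' a' sys_refl[OF pf I(2) a']] I a'
        by blast
    next
      case 3
      then show ?thesis using emb_chain[OF fac dp I(2) 3(1) _ 3(2) _ a'] fac_emb_in[OF fac I(2) 3(1,2) a']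
        by blast
    qed
  qed
  have AP: "sys_approx I le M tr x y" if xy: "x \<in> \<alpha>0" "y \<in> \<alpha>0" for x y
  proof -
    obtain p where p: "p \<in> I" "x \<in> M p" "\<forall>m\<in>I. le i' m \<longrightarrow> le p m \<longrightarrow> tr (emb i' m a') x"
      using P[OF xy(1)] by blast
    obtain q where q: "q \<in> I" "y \<in> M q" "\<forall>m\<in>I. le i' m \<longrightarrow> le q m \<longrightarrow> tr (emb i' m a') y"
      using P[OF xy(2)] by blast
    obtain m1 where m1: "m1 \<in> I" "le p m1" "le q m1" using dp_ub[OF dp p(1) q(1)] by blast
    obtain m where m: "m \<in> I" "le m1 m" "le i' m" using dp_ub[OF dp m1(1) I(2)] by blast
    have pm: "le p m" using dp_trans[OF dp p(1) m1(1) m(1) m1(2) m(2)] .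
    have qm: "le q m" using dp_trans[OF dp q(1) m1(1) m(1) m1(3) m(2)] .
    show ?thesis using ap_intro[where M=M and I=I and le=le and tr=tr, OF p(1) q(1) m(1) p(2) q(2) fac_emb_in[OF fac I(2) m(1) m(3) a'] pm qm]
        p(3) q(3) m pm qm by blast
  qed
  define U where "U = {k \<in> I. le i' k}"
  have "upward_closed I le U" unfolding upward_closed_def U_def
    using dp_trans[OF dp] I(2) by blast
  moreover have "U \<noteq> {}" unfolding U_def using I(2) dp_refl[OF dp I(2)] by blast
  moreover have "\<forall>A. upward_closed I le A \<and> A \<noteq> {} \<longrightarrow> A \<in> F"
    using F unfolding admissible_family_def by meson
  ultimately have UF: "U \<in> F" by blast
  have Fsup: "B \<in> F" if "A \<in> F" "A \<subseteq> B" "B \<subseteq> I" for A B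
  proof -
    have "\<forall>A\<in>F. \<forall>B. A \<subseteq> B \<and> B \<subseteq> I \<longrightarrow> B \<in> F"
      using F unfolding admissible_family_def by meson
    then show ?thesis using that by blast
  qed
  have cons0: "consistent I le M tr F \<alpha>0"
    unfolding consistent_def
  proof (intro conjI)
    show "\<alpha>0 \<subseteq> \<Union> (M ` I)" using I a a' fac_emb_in[OF fac I(2)] unfolding \<alpha>0_def by blast
    show "\<forall>x\<in>\<alpha>0. \<forall>y\<in>\<alpha>0. \<forall>i\<in>I. \<forall>i'\<in>I. le i i' \<and> x \<in> M i' \<and> y \<in> M i \<longrightarrow> tr x y"
      using AP pf_tr[OF pf] by blast
    have "U \<subseteq> {i \<in> I. \<alpha>0 \<inter> M i \<noteq> {}}"
      unfolding U_def \<alpha>0_def using fac_emb_in[OF fac I(2) _ _ a'] by blast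
    then show "{i \<in> I. \<alpha>0 \<inter> M i \<noteq> {}} \<in> F" using Fsup[OF UF] by blast
  qed
  define A where "A = {\<beta>. consistent I le M tr F \<beta> \<and> \<alpha>0 \<subseteq> \<beta>}"
  have "\<exists>U\<in>A. \<forall>X\<in>C. X \<subseteq> U" if C: "C \<in> chains A" for C
  proof (cases "C = {}")
    case True
    then show ?thesis using cons0 unfolding A_def by blast
  next
    case False
    then obtain X0 where X0: "X0 \<in> C" by blast
    have CA: "C \<subseteq> A" and ch: "\<forall>X\<in>C. \<forall>Y\<in>C. X \<subseteq> Y \<or> Y \<subseteq> X"
      using C unfolding chains_def chain_subset_def by auto
    have consC: "consistent I le M tr F X" if "X \<in> C" for X
      using CA that unfolding A_def by blast
    have "consistent I le M tr F (\<Union>C)"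
      unfolding consistent_def
    proof (intro conjI)
      have "X \<subseteq> \<Union> (M ` I)" if "X \<in> C" for X
        using consC[OF that] unfolding consistent_def by meson
      then show "\<Union>C \<subseteq> \<Union> (M ` I)" by blast
      show "\<forall>x\<in>\<Union>C. \<forall>y\<in>\<Union>C. \<forall>i\<in>I. \<forall>i'\<in>I. le i i' \<and> x \<in> M i' \<and> y \<in> M i \<longrightarrow> tr x y"
      proof (intro ballI impI)
        fix x y i i'' assume x: "x \<in> \<Union>C" and y: "y \<in> \<Union>C" and ii: "i \<in> I" "i'' \<in> I"
          and h: "le i i'' \<and> x \<in> M i'' \<and> y \<in> M i"
        obtain X Y where "X \<in> C" "Y \<in> C" "x \<in> X" "y \<in> Y" using x y by blast
        then obtain Z where Z: "Z \<in> C" "x \<in> Z" "y \<in> Z" using ch by blast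
        have "\<forall>a\<in>Z. \<forall>b\<in>Z. \<forall>i\<in>I. \<forall>i'\<in>I. le i i' \<and> a \<in> M i' \<and> b \<in> M i \<longrightarrow> tr a b"
          using consC[OF Z(1)] unfolding consistent_def by meson
        then show "tr x y" using Z(2,3) ii h by blast
      qed
      have "{i \<in> I. X0 \<inter> M i \<noteq> {}} \<in> F" using consC[OF X0] unfolding consistent_def by meson
      moreover have "{i \<in> I. X0 \<inter> M i \<noteq> {}} \<subseteq> {i \<in> I. \<Union>C \<inter> M i \<noteq> {}}" using X0 by blast
      ultimately show "{i \<in> I. \<Union>C \<inter> M i \<noteq> {}} \<in> F" using Fsup by blast
    qed
    moreover have "\<alpha>0 \<subseteq> \<Union>C" using X0 CA unfolding A_def by blast
    ultimately show ?thesis unfolding A_def by blast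
  qed
  then obtain \<alpha> where \<alpha>: "\<alpha> \<in> A" "\<forall>X\<in>A. \<alpha> \<subseteq> X \<longrightarrow> X = \<alpha>"
    using Zorn_Lemma2[of A] by blast
  have "\<alpha> \<in> elem I le M tr F"
    unfolding elem_def using \<alpha> unfolding A_def by blast
  moreover have "a \<in> \<alpha>" "a' \<in> \<alpha>" using \<alpha>(1) unfolding A_def \<alpha>0_def by auto
  ultimately show ?thesis by blast
qed



lemma fs_fst: "x \<in> fs_states I leI M trM J leJ N trN p \<Longrightarrow> fst x = p"
  unfolding fs_states_def by auto

lemma fs_fun: "(p, f) \<in> fs_states I leI M trM J leJ N trN p \<Longrightarrow> a \<in> M (fst p) \<Longrightarrow> f a \<in> N (snd p)"
  unfolding fs_states_def by auto

lemma elem_cons: "\<zeta> \<in> elem I le M tr F \<Longrightarrow> consistent I le M tr F \<zeta>"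
  unfolding elem_def by blast

lemma fs_mem:
  assumes "consistent (I \<times> J) (prod_le leI leJ) (fs_states I leI M trM J leJ N trN)
                  (fs_tr I leI M trM J leJ N trN) FIJ \<zeta>" and "x \<in> \<zeta>"
  shows "fst x \<in> I \<times> J \<and> x \<in> fs_states I leI M trM J leJ N trN (fst x)"
proof -
  have "\<zeta> \<subseteq> (\<Union>p\<in>I \<times> J. fs_states I leI M trM J leJ N trN p)"
    using assms(1) unfolding consistent_def by meson
  then obtain p where "p \<in> I \<times> J" "x \<in> fs_states I leI M trM J leJ N trN p" using assms(2) by blast
  then show ?thesis using fs_fst by metis
qed

lemma fs_pair:
  assumes "consistent (I \<times> J) (prod_le leI leJ) (fs_states I leI M trM J leJ N trN)
                  (fs_tr I leI M trM J leJ N trN) FIJ \<zeta>" and "x \<in> \<zeta>" "y \<in> \<zeta>"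
    and "prod_le leI leJ (fst y) (fst x)"
  shows "\<forall>a'\<in>M (fst (fst x)). \<forall>a\<in>M (fst (fst y)). trM a' a \<longrightarrow> trN (snd x a') (snd y a)"
proof -
  have "\<forall>a\<in>\<zeta>. \<forall>b\<in>\<zeta>. \<forall>i\<in>I \<times> J. \<forall>i'\<in>I \<times> J. prod_le leI leJ i i'
       \<and> a \<in> fs_states I leI M trM J leJ N trN i' \<and> b \<in> fs_states I leI M trM J leJ N trN i
      \<longrightarrow> fs_tr I leI M trM J leJ N trN a b"
    using assms(1) unfolding consistent_def by meson
  note H = this
  have A: "fst y \<in> I \<times> J" "fst x \<in> I \<times> J" "x \<in> fs_states I leI M trM J leJ N trN (fst x)"
     "y \<in> fs_states I leI M trM J leJ N trN (fst y)"
    using fs_mem[OF assms(1,2)] fs_mem[OF assms(1,3)] by simp_all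
  have "fs_tr I leI M trM J leJ N trN x y"
    using H[rule_format, OF assms(2,3) A(1) A(2) conjI[OF assms(4) conjI[OF A(3) A(4)]]] .
  then show ?thesis unfolding fs_tr_def by (elim conjE)
qed

lemma fs_idx:
  assumes "consistent (I \<times> J) (prod_le leI leJ) (fs_states I leI M trM J leJ N trN)
                  (fs_tr I leI M trM J leJ N trN) FIJ \<zeta>"
  shows "{p \<in> I \<times> J. \<zeta> \<inter> fs_states I leI M trM J leJ N trN p \<noteq> {}} \<in> FIJ"
  using assms unfolding consistent_def by meson

lemma adm_cof: "admissible_family I le F \<Longrightarrow> A \<in> F \<Longrightarrow> i \<in> I \<Longrightarrow> \<exists>k\<in>A. le i k"
proof -
  assume h: "admissible_family I le F" "A \<in> F" "i \<in> I"
  have "\<forall>A\<in>F. cofinal I le A" using h(1) unfolding admissible_family_def by meson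
  then have "cofinal I le A" using h(2) by blast
  then show ?thesis using h(3) unfolding cofinal_def by blast
qed

lemma adm_sup: "admissible_family I le F \<Longrightarrow> A \<in> F \<Longrightarrow> A \<subseteq> B \<Longrightarrow> B \<subseteq> I \<Longrightarrow> B \<in> F"
proof -
  assume h: "admissible_family I le F" "A \<in> F" "A \<subseteq> B" "B \<subseteq> I"
  have "\<forall>A\<in>F. \<forall>B. A \<subseteq> B \<and> B \<subseteq> I \<longrightarrow> B \<in> F" using h(1) unfolding admissible_family_def by meson
  then show ?thesis using h(2-4) by blast
qed

lemma keyL:
  assumes dirI: "directed_preorder I leI"
    and dirJ: "directed_preorder J leJ"
    and FI: "admissible_family I leI FI"
    and FIJ: "admissible_family (I \<times> J) (prod_le leI leJ) FIJ"
    and facM: "factor_system I leI M trM embM projM"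
    and facN: "factor_system J leJ N trN embN projN"
    and z: "consistent (I \<times> J) (prod_le leI leJ) (fs_states I leI M trM J leJ N trN)
                  (fs_tr I leI M trM J leJ N trN) FIJ \<zeta>"
    and z': "consistent (I \<times> J) (prod_le leI leJ) (fs_states I leI M trM J leJ N trN)
                  (fs_tr I leI M trM J leJ N trN) FIJ \<zeta>'"
    and eq: "\<forall>\<alpha>\<in>elem I leI M trM FI. fs_apply M \<zeta>' \<alpha> = fs_apply M \<zeta> \<alpha>"
    and f: "((i, j), f) \<in> \<zeta>" and g: "((i', j'), g) \<in> \<zeta>'"
    and le: "leI i i'" "leJ j j'"
    and a: "a \<in> M i" and a': "a' \<in> M i'" and t: "trM a' a"
  shows "trN (g a') (f a)"
proof -
  let ?ST = "fs_states I leI M trM J leJ N trN"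
  have pfN: "prefactor_system J leJ N trN" using facN by (rule fac_pf)
  have fm: "(i, j) \<in> I \<times> J" "((i, j), f) \<in> ?ST (i, j)" using fs_mem[OF z f] by simp_all
  have gm: "(i', j') \<in> I \<times> J" "((i', j'), g) \<in> ?ST (i', j')" using fs_mem[OF z' g] by simp_all
  have ij: "i \<in> I" "j \<in> J" "i' \<in> I" "j' \<in> J" using fm(1) gm(1) by simp_all
  have ex: "\<exists>\<alpha>\<in>elem I leI M trM FI. a \<in> \<alpha> \<and> a' \<in> \<alpha>"
    by (rule exists_elem[OF facM dirI FI ij(1) ij(3) le(1) a a' t])
  then obtain \<alpha> where \<alpha>: "\<alpha> \<in> elem I leI M trM FI" "a \<in> \<alpha>" "a' \<in> \<alpha>"
    by (elim bexE conjE)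
  have ca: "consistent I leI M trM FI \<alpha>" using \<alpha>(1) by (rule elem_cons)
  have "g a' \<in> fs_apply M \<zeta>' \<alpha>" unfolding fs_apply_def
    by (rule CollectI, intro exI[of _ "(i', j')"] exI[of _ g] exI[of _ a'] conjI refl g \<alpha>(3)) (simp add: a')
  then have "g a' \<in> fs_apply M \<zeta> \<alpha>" using eq \<alpha>(1) by blast
  then obtain q h b where qh: "(q, h) \<in> \<zeta>" "b \<in> \<alpha>" "b \<in> M (fst q)" "g a' = h b"
    unfolding fs_apply_def by blast
  obtain k l where q: "q = (k, l)" by (cases q)
  have hm: "(k, l) \<in> I \<times> J" "((k, l), h) \<in> ?ST (k, l)" using fs_mem[OF z qh(1)] q by simp_all
  have b: "b \<in> M k" using qh(3) q by simp
  have hb: "h b \<in> N l" using fs_fun[OF hm(2)] b by simp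
  have ga: "g a' \<in> N j'" using fs_fun[OF gm(2)] a' by simp
  have fa: "f a \<in> N j" using fs_fun[OF fm(2)] a by simp
  have l: "l = j'" using sys_disj[OF pfN _ ij(4) hb] hm(1) ga qh(4) by auto
  have kI: "k \<in> I" using hm(1) by auto
  obtain k0 where k0: "k0 \<in> I" "leI k k0" "leI i k0" using dp_ub[OF dirI kI ij(1)] by blast
  obtain r where r: "r \<in> {p \<in> I \<times> J. \<zeta> \<inter> ?ST p \<noteq> {}}" "prod_le leI leJ (k0, j') r"
    using adm_cof[OF FIJ fs_idx[OF z], of "(k0, j')"] k0(1) ij(4) by blast
  obtain k1 l1 where r1: "r = (k1, l1)" by (cases r)
  obtain x where x: "x \<in> \<zeta>" "x \<in> ?ST r" using r(1) by blast
  have xr: "fst x = r" using fs_fst[OF x(2)] .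
  define h' where "h' = snd x"
  have kl1: "k1 \<in> I" "l1 \<in> J" "leI k0 k1" "leJ j' l1" using r r1 unfolding prod_le_def by auto
  have xs: "x = ((k1, l1), h')" using xr r1 h'_def by (metis prod.collapse)
  have "{i \<in> I. \<alpha> \<inter> M i \<noteq> {}} \<in> FI" using ca unfolding consistent_def by meson
  then obtain k2 where k2: "k2 \<in> {i \<in> I. \<alpha> \<inter> M i \<noteq> {}}" "leI k1 k2"
    using adm_cof[OF FI _ kl1(1)] by blast
  have k2I: "k2 \<in> I" using k2(1) by blast
  obtain c0 where c0: "c0 \<in> \<alpha>" "c0 \<in> M k2" using k2(1) by blast
  define d where "d = projM k2 k1 c0"
  have d: "d \<in> M k1" unfolding d_def using fac_proj_in[OF facM kl1(1) k2I k2(2) c0(2)] .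
  have kk1: "leI k k1" using dp_trans[OF dirI kI k0(1) kl1(1) k0(2) kl1(3)] .
  have ik1: "leI i k1" using dp_trans[OF dirI ij(1) k0(1) kl1(1) k0(3) kl1(3)] .
  have kk2: "leI k k2" using dp_trans[OF dirI kI kl1(1) k2I kk1 k2(2)] .
  have ik2: "leI i k2" using dp_trans[OF dirI ij(1) kl1(1) k2I ik1 k2(2)] .
  have cpair: "\<forall>a\<in>\<alpha>. \<forall>b\<in>\<alpha>. \<forall>i\<in>I. \<forall>i'\<in>I. leI i i' \<and> a \<in> M i' \<and> b \<in> M i \<longrightarrow> trM a b"
    using ca unfolding consistent_def by meson
  have c0b: "trM c0 b" using cpair c0 qh(2) b kI k2I kk2 by blast
  have c0a: "trM c0 a" using cpair c0 \<alpha>(2) a ij(1) k2I ik2 by blast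
  have db: "trM d b" unfolding d_def using fac_proj_tr[OF facM kI kl1(1) k2I kk1 k2(2) c0(2) b c0b] .
  have da: "trM d a" unfolding d_def using fac_proj_tr[OF facM ij(1) kl1(1) k2I ik1 k2(2) c0(2) a c0a] .
  have jl1: "leJ j l1" using dp_trans[OF dirJ ij(2) ij(4) kl1(2) le(2) kl1(4)] .
  have "\<forall>a'\<in>M k1. \<forall>a\<in>M k. trM a' a \<longrightarrow> trN (h' a') (h a)"
    using fs_pair[OF z x(1) qh(1)] xs q l kk1 kl1(4) unfolding prod_le_def by simp
  then have t1: "trN (h' d) (h b)" using d b db by blast
  have "\<forall>a'\<in>M k1. \<forall>a\<in>M i. trM a' a \<longrightarrow> trN (h' a') (f a)"
    using fs_pair[OF z x(1) f] xs ik1 jl1 unfolding prod_le_def by simp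
  then have t2: "trN (h' d) (f a)" using d a da by blast
  have hd: "h' d \<in> N l1" using fs_fun[of "(k1, l1)" h'] x(2) xs r1 d by simp
  have "sys_approx J leJ N trN (h b) (f a)"
    using ap_intro[where M=N and I=J and le=leJ and tr=trN, OF ij(4) ij(2) kl1(2) _ fa hd kl1(4) jl1 _ t2]
      hb l t1 by simp
  then have "trN (h b) (f a)" using pf_tr[OF pfN ij(2) ij(4) le(2) _ fa] hb l by simp
  then show ?thesis using qh(4) by simp
qed

theorem lemma2p13:
  fixes I :: "'i set" and leI :: "'i \<Rightarrow> 'i \<Rightarrow> bool" and M :: "'i \<Rightarrow> 'a set"
    and trM :: "'a \<Rightarrow> 'a \<Rightarrow> bool" and embM projM :: "'i \<Rightarrow> 'i \<Rightarrow> 'a \<Rightarrow> 'a"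
    and J :: "'j set" and leJ :: "'j \<Rightarrow> 'j \<Rightarrow> bool" and N :: "'j \<Rightarrow> 'b set"
    and trN :: "'b \<Rightarrow> 'b \<Rightarrow> bool" and embN projN :: "'j \<Rightarrow> 'j \<Rightarrow> 'b \<Rightarrow> 'b"
    and FI :: "'i set set" and FJ :: "'j set set" and FIJ :: "('i \<times> 'j) set set"
    and \<zeta> \<zeta>' :: "(('i \<times> 'j) \<times> ('a \<Rightarrow> 'b)) set"
  assumes dirI: "directed_preorder I leI"
    and dirJ: "directed_preorder J leJ"
    and FI: "admissible_family I leI FI"
    and FJ: "admissible_family J leJ FJ"
    and FIJ: "admissible_family (I \<times> J) (prod_le leI leJ) FIJ"
    and D: "condD I J FI FJ FIJ"
    and facM: "factor_system I leI M trM embM projM"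
    and facN: "factor_system J leJ N trN embN projN"
    and z: "\<zeta> \<in> elem (I \<times> J) (prod_le leI leJ) (fs_states I leI M trM J leJ N trN)
                  (fs_tr I leI M trM J leJ N trN) FIJ"
    and z': "\<zeta>' \<in> elem (I \<times> J) (prod_le leI leJ) (fs_states I leI M trM J leJ N trN)
                  (fs_tr I leI M trM J leJ N trN) FIJ"
    and eq: "\<forall>\<alpha>\<in>elem I leI M trM FI. fs_apply M \<zeta> \<alpha> = fs_apply M \<zeta>' \<alpha>"
  shows "\<zeta> = \<zeta>'"
  proof -
  let ?ST = "fs_states I leI M trM J leJ N trN"
  let ?TR = "fs_tr I leI M trM J leJ N trN"
  let ?le = "prod_le leI leJ"
  have cz: "consistent (I \<times> J) ?le ?ST ?TR FIJ \<zeta>" using z by (rule elem_cons)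
  have cz': "consistent (I \<times> J) ?le ?ST ?TR FIJ \<zeta>'" using z' by (rule elem_cons)
  have eq': "\<forall>\<alpha>\<in>elem I leI M trM FI. fs_apply M \<zeta>' \<alpha> = fs_apply M \<zeta> \<alpha>" using eq by simp
  have U: "consistent (I \<times> J) ?le ?ST ?TR FIJ (\<zeta> \<union> \<zeta>')"
    unfolding consistent_def
  proof (intro conjI)
    have "\<zeta> \<subseteq> (\<Union>p\<in>I \<times> J. ?ST p)" using cz unfolding consistent_def by meson
    moreover have "\<zeta>' \<subseteq> (\<Union>p\<in>I \<times> J. ?ST p)" using cz' unfolding consistent_def by meson
    ultimately show "\<zeta> \<union> \<zeta>' \<subseteq> (\<Union>p\<in>I \<times> J. ?ST p)" by blast
    show "\<forall>u\<in>\<zeta> \<union> \<zeta>'. \<forall>v\<in>\<zeta> \<union> \<zeta>'. \<forall>p\<in>I \<times> J. \<forall>p'\<in>I \<times> J.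
        ?le p p' \<and> u \<in> ?ST p' \<and> v \<in> ?ST p \<longrightarrow> ?TR u v"
    proof (intro ballI impI)
      fix u v p p' assume u: "u \<in> \<zeta> \<union> \<zeta>'" and v: "v \<in> \<zeta> \<union> \<zeta>'" and pp: "p \<in> I \<times> J" "p' \<in> I \<times> J"
        and h: "?le p p' \<and> u \<in> ?ST p' \<and> v \<in> ?ST p"
      have fu: "fst u = p'" using h fs_fst by blast
      have fv: "fst v = p" using h fs_fst by blast
      obtain i j where p: "p = (i, j)" by (cases p)
      obtain i' j' where p': "p' = (i', j')" by (cases p')
      have le: "leI i i'" "leJ j j'" using h p p' unfolding prod_le_def by simp_all
      have us: "u = ((i', j'), snd u)" using fu p' by (metis prod.collapse)
      have vs: "v = ((i, j), snd v)" using fv p by (metis prod.collapse)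
      have tr: "\<forall>a'\<in>M (fst p'). \<forall>a\<in>M (fst p). trM a' a \<longrightarrow> trN (snd u a') (snd v a)"
      proof (intro ballI impI)
        fix a' a assume a': "a' \<in> M (fst p')" and a: "a \<in> M (fst p)" and t: "trM a' a"
        have a'': "a' \<in> M i'" using a' p' by simp
        have a0: "a \<in> M i" using a p by simp
        consider "u \<in> \<zeta>" "v \<in> \<zeta>" | "u \<in> \<zeta>'" "v \<in> \<zeta>'" | "u \<in> \<zeta>'" "v \<in> \<zeta>" | "u \<in> \<zeta>" "v \<in> \<zeta>'"
          using u v by blast
        then show "trN (snd u a') (snd v a)"
        proof cases
          case 1
          have "?le (fst v) (fst u)" using h fu fv by simp
          then show ?thesis using fs_pair[OF cz 1(1) 1(2)] fu fv a' a t by blast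
        next
          case 2
          have "?le (fst v) (fst u)" using h fu fv by simp
          then show ?thesis using fs_pair[OF cz' 2(1) 2(2)] fu fv a' a t by blast
        next
          case 3
          have v1: "((i, j), snd v) \<in> \<zeta>" using 3(2) vs by simp
          have u1: "((i', j'), snd u) \<in> \<zeta>'" using 3(1) us by simp
          show ?thesis using keyL[OF dirI dirJ FI FIJ facM facN cz cz' eq' v1 u1 le a0 a'' t] .
        next
          case 4
          have v1: "((i, j), snd v) \<in> \<zeta>'" using 4(2) vs by simp
          have u1: "((i', j'), snd u) \<in> \<zeta>" using 4(1) us by simp
          show ?thesis using keyL[OF dirI dirJ FI FIJ facM facN cz' cz eq v1 u1 le a0 a'' t] .
        qed
      qed
      show "?TR u v" unfolding fs_tr_def fu fv using pp h tr by blast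
    qed
    have "{p \<in> I \<times> J. \<zeta> \<inter> ?ST p \<noteq> {}} \<in> FIJ" using fs_idx[OF cz] .
    moreover have "{p \<in> I \<times> J. \<zeta> \<inter> ?ST p \<noteq> {}} \<subseteq> {p \<in> I \<times> J. (\<zeta> \<union> \<zeta>') \<inter> ?ST p \<noteq> {}}" by blast
    ultimately show "{p \<in> I \<times> J. (\<zeta> \<union> \<zeta>') \<inter> ?ST p \<noteq> {}} \<in> FIJ"
      using adm_sup[OF FIJ] by blast
  qed
  have m1: "\<forall>\<beta>. consistent (I \<times> J) ?le ?ST ?TR FIJ \<beta> \<and> \<zeta> \<subseteq> \<beta> \<longrightarrow> \<beta> = \<zeta>"
    using z unfolding elem_def by blast
  have m2: "\<forall>\<beta>. consistent (I \<times> J) ?le ?ST ?TR FIJ \<beta> \<and> \<zeta>' \<subseteq> \<beta> \<longrightarrow> \<beta> = \<zeta>'"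
    using z' unfolding elem_def by blast
  have "\<zeta> \<union> \<zeta>' = \<zeta>" using m1 U by blast
  moreover have "\<zeta> \<union> \<zeta>' = \<zeta>'" using m2 U by blast
  ultimately show ?thesis by simp
qed

end
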